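(* Let $n\in\mathbb{N}$ and, for $1\le j\le n$, let $0<c_{j}<1$, $k_{j}>0$ and $q_{j}=e^{-2k_{j}^{2}}$. Then the function \[ H(x)=\prod_{j=1}^{n}e^{-x^{2}}\left(-c_{j}e^{-k_{j}^{2}-2xk_{j}},-c_{j}e^{-k_{j}^{2}+2xk_{j}};q_{j}\right)_{\infty},\qquad x\in\mathbb{R}, \] is positive definite. Furthermore, for all $m\in\mathbb{N}$ and $x_{1},\dots,x_{m}\in\mathbb{R}$ the matrices \[ \left(\prod_{j=1}^{n}e^{-(x_{r}-x_{s})^{2}}\left(-c_{j}e^{-k_{j}^{2}-2(x_{r}-x_{s})k_{j}},-c_{j}e^{-k_{j}^{2}-2(x_{s}-x_{r})k_{j}};q_{j}\right)_{\infty}\right)_{r,s=1}^{m} \] are positive semidefinite, and for $k>0$, $q=e^{-2k^{2}}$ and $0<c<q^{1/2}$ we have \[ \left(-ce^{-2xk},-ce^{2xk};q\right)_{\infty}\le e^{x^{2}}\left(-c,-c;q\right)_{\infty},\qquad x\in\mathbb{R}. \]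
   Context: For $0<q<1$ and $a\in\mathbb{C}$, $(a;q)_{\infty}=\prod_{k=0}^{\infty}(1-aq^{k})$ and $(a_1,\dots,a_r;q)_\infty=\prod_{s=1}^r(a_s;q)_\infty$. A continuous function $f:\mathbb{R}\to\mathbb{C}$ with $f(0)>0$ is called positive definite if for every $n\in\mathbb{N}$ and all $x_{1},\dots,x_{n}\in\mathbb{R}$ the matrix $(f(x_{j}-x_{k}))_{j,k=1}^{n}$ is positive semidefinite (equivalently, $f$ is the Fourier transform of a finite positive measure on $\mathbb{R}$). *)

theory Defs
  imports "HOL-Analysis.Analysis" "HOL-Library.Complex_Order"
begin

definition qpoch_inf :: "complex \<Rightarrow> real \<Rightarrow> complex" where
  "qpoch_inf a q = (\<Prod>k. 1 - a * complex_of_real (q ^ k))"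

definition qpoch_inf_list :: "complex list \<Rightarrow> real \<Rightarrow> complex" where
  "qpoch_inf_list as q = prod_list (map (\<lambda>a. qpoch_inf a q) as)"

definition psd_matrix :: "nat \<Rightarrow> (nat \<Rightarrow> nat \<Rightarrow> complex) \<Rightarrow> bool" where
  "psd_matrix m A \<longleftrightarrow>
     (\<forall>v :: nat \<Rightarrow> complex. 0 \<le> (\<Sum>r<m. \<Sum>s<m. cnj (v r) * A r s * v s))"

definition positive_definite :: "(real \<Rightarrow> complex) \<Rightarrow> bool" where
  "positive_definite f \<longleftrightarrow> continuous_on UNIV f \<and> Re (f 0) > 0 \<and> Im (f 0) = 0 \<and>
     (\<forall>m (x :: nat \<Rightarrow> real). psd_matrix m (\<lambda>r s. f (x r - x s)))"

end

theory Submission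
  imports Defs
begin

definition qp :: "real \<Rightarrow> nat \<Rightarrow> real" where "qp q n = (\<Prod>m<n. 1 - q ^ Suc m)"

primrec tri :: "nat \<Rightarrow> nat" where
  "tri 0 = 0" | "tri (Suc i) = tri i + i"

definition ea :: "real \<Rightarrow> nat \<Rightarrow> real" where "ea q i = q ^ tri i / qp q i"

definition E :: "real \<Rightarrow> real \<Rightarrow> real" where "E q z = (\<Sum>i. ea q i * z ^ i)"

lemma tri_real: "2 * real (tri i) = real i * (real i - 1)"
  by (induction i) (auto simp: algebra_simps)

lemma qp_0[simp]: "qp q 0 = 1" by (simp add: qp_def)
lemma qp_Suc: "qp q (Suc n) = qp q n * (1 - q ^ Suc n)" by (simp add: qp_def)

lemma qp_pos: assumes "0 < q" "q < 1" shows "0 < qp q n"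
proof -
  have "\<And>m. q ^ Suc m < 1" using assms by (intro power_Suc_less_one) 
  then show ?thesis unfolding qp_def by (intro prod_pos) auto
qed

lemma ea_0[simp]: "ea q 0 = 1" by (simp add: ea_def)
lemma ea_nonneg: assumes "0 < q" "q < 1" shows "0 \<le> ea q i"
  unfolding ea_def using qp_pos[OF assms, of i] assms by (intro divide_nonneg_pos) auto

lemma ea_Suc: assumes "0 < q" "q < 1"
  shows "ea q (Suc i) * (1 - q ^ Suc i) = ea q i * q ^ i"
proof -
  have "1 - q ^ Suc i \<noteq> 0" using power_Suc_less_one[OF assms, of i] by simp
  then show ?thesis using qp_pos[OF assms, of i]
    by (simp add: ea_def qp_Suc power_add field_simps)
qed

lemma ea_summable: assumes "0 < q" "q < 1" and that: "0 \<le> r"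
  shows "summable (\<lambda>i. ea q i * r ^ i)"
proof -
  have q0: "(\<lambda>n. q ^ n) \<longlonglongrightarrow> 0" using assms by (intro LIMSEQ_power_zero) auto
  then have "(\<lambda>n. r * q ^ n / (1 - q)) \<longlonglongrightarrow> r * 0 / (1 - q)"
    by (intro tendsto_intros) (use assms in auto)
  then have "eventually (\<lambda>n. r * q ^ n / (1 - q) < 1/2) sequentially"
    by (intro order_tendstoD) auto
  then obtain N where N: "\<And>n. n \<ge> N \<Longrightarrow> r * q ^ n / (1 - q) < 1/2"
    unfolding eventually_sequentially by blast
  show ?thesis
  proof (rule summable_ratio_test[of "1/2" N])
    fix n assume n: "N \<le> n"
    have qs: "q ^ Suc n \<le> q" using assms by (simp add: power_le_one mult_left_le)
    have den: "1 - q \<le> 1 - q ^ Suc n" using qs by simp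
    have pos: "0 < 1 - q" using assms by simp
    have qsn: "0 < 1 - q ^ Suc n" using power_Suc_less_one[OF assms(1,2), of n] by simp
    have e: "ea q (Suc n) = ea q n * q ^ n / (1 - q ^ Suc n)"
      using ea_Suc[OF assms(1,2), of n] pos den by (simp add: field_simps)
    have "ea q (Suc n) * r ^ Suc n = (ea q n * r ^ n) * (r * q ^ n / (1 - q ^ Suc n))"
      by (simp add: e field_simps)
    also have "\<dots> \<le> (ea q n * r ^ n) * (r * q ^ n / (1 - q))"
      using ea_nonneg[OF assms(1,2), of n] that pos den assms qsn
      by (intro mult_left_mono divide_left_mono mult_nonneg_nonneg mult_pos_pos) auto
    also have "\<dots> \<le> (ea q n * r ^ n) * (1/2)"
      using N[OF n] ea_nonneg[OF assms(1,2), of n] that by (intro mult_left_mono) auto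
    finally show "norm (ea q (Suc n) * r ^ Suc n) \<le> 1/2 * norm (ea q n * r ^ n)"
      using ea_nonneg[OF assms(1,2)] that by (simp add: abs_mult)
  qed auto
qed

lemma ea_summable_norm: assumes "0 < q" "q < 1"
  shows "summable (\<lambda>i. norm (ea q i * z ^ i))"
proof -
  have "(\<lambda>i. norm (ea q i * z ^ i)) = (\<lambda>i. ea q i * \<bar>z\<bar> ^ i)"
    using ea_nonneg[OF assms] by (simp add: abs_mult power_abs)
  then show ?thesis using ea_summable[OF assms(1,2), of "\<bar>z\<bar>"] by simp
qed

lemma ea_summable': assumes "0 < q" "q < 1"
  shows "summable (\<lambda>i. ea q i * z ^ i)"
  by (rule summable_norm_cancel[OF ea_summable_norm[OF assms]])

lemma E_sums: assumes "0 < q" "q < 1" shows "(\<lambda>i. ea q i * z ^ i) sums E q z"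
  using ea_summable'[OF assms] unfolding E_def by (rule summable_sums)

lemma E_cont: assumes "0 < q" "q < 1" shows "isCont (E q) z"
  unfolding E_def[abs_def] using ea_summable'[OF assms]
  by (intro isCont_powser_converges_everywhere) auto

lemma E_0: "E q 0 = 1"
  unfolding E_def using powser_zero[of "ea q"] by simp

lemma E_funeq: assumes "0 < q" "q < 1" shows "E q z = (1 + z) * E q (q * z)"
proof -
  define g1 where "g1 i = ea q i * (q * z) ^ i" for i
  define h where "h i = (if i = 0 then 0 else z * g1 (i - 1))" for i
  have s1: "g1 sums E q (q * z)" unfolding g1_def by (rule E_sums[OF assms])
  have "(\<lambda>i. h (Suc i)) sums (z * E q (q * z))" unfolding h_def by (simp add: sums_mult s1)
  then have s2: "h sums (z * E q (q * z))" by (subst (asm) sums_Suc_iff) (simp add: h_def)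
  have "(\<lambda>i. g1 i + h i) sums (E q (q * z) + z * E q (q * z))" by (rule sums_add[OF s1 s2])
  moreover have "(\<lambda>i. g1 i + h i) = (\<lambda>i. ea q i * z ^ i)"
  proof
    fix i show "g1 i + h i = ea q i * z ^ i"
    proof (cases i)
      case 0 then show ?thesis by (simp add: g1_def h_def)
    next
      case (Suc j)
      have "ea q (Suc j) * q ^ Suc j + ea q j * q ^ j = ea q (Suc j)"
        using ea_Suc[OF assms, of j] by (simp add: algebra_simps)
      moreover have "ea q (Suc j) * (q ^ Suc j * z ^ Suc j) + z * (ea q j * (q ^ j * z ^ j)) = z ^ Suc j * (ea q (Suc j) * q ^ Suc j + ea q j * q ^ j)"
        by (simp add: algebra_simps)
      ultimately have "ea q (Suc j) * (q ^ Suc j * z ^ Suc j) + z * (ea q j * (q ^ j * z ^ j)) = ea q (Suc j) * z ^ Suc j"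
        by simp
      then show ?thesis using Suc by (simp add: g1_def h_def power_mult_distrib mult_ac)
    qed
  qed
  ultimately have "(\<lambda>i. ea q i * z ^ i) sums ((1 + z) * E q (q * z))" by (simp add: algebra_simps)
  then show ?thesis using E_sums[OF assms] sums_unique2 by blast
qed

lemma E_prod: assumes "0 < q" "q < 1" shows "E q z = (\<Prod>m<M. 1 + z * q ^ m) * E q (q ^ M * z)"
proof (induction M)
  case 0 then show ?case by simp
next
  case (Suc M)
  have "E q (q ^ M * z) = (1 + z * q ^ M) * E q (q ^ Suc M * z)"
    using E_funeq[OF assms, of "q ^ M * z"] by (simp add: algebra_simps)
  then show ?case using Suc by (simp add: algebra_simps)
qed

lemma E_lim: assumes "0 < q" "q < 1" shows "(\<lambda>M. \<Prod>m<M. 1 + z * q ^ m) \<longlonglongrightarrow> E q z"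
proof -
  have "(\<lambda>M. q ^ M * z) \<longlonglongrightarrow> 0 * z"
    using assms by (intro tendsto_intros LIMSEQ_power_zero) auto
  then have t: "(\<lambda>M. E q (q ^ M * z)) \<longlonglongrightarrow> E q 0"
    using E_cont[OF assms, of 0] isCont_tendsto_compose by fastforce
  then have "(\<lambda>M. E q z / E q (q ^ M * z)) \<longlonglongrightarrow> E q z / E q 0"
    by (intro tendsto_intros) (auto simp: E_0)
  moreover have "eventually (\<lambda>M. E q (q ^ M * z) \<noteq> 0) sequentially"
    using t by (intro tendsto_imp_eventually_ne) (auto simp: E_0)
  then have "eventually (\<lambda>M. E q z / E q (q ^ M * z) = (\<Prod>m<M. 1 + z * q ^ m)) sequentially"
    by eventually_elim (metis E_prod[OF assms] nonzero_mult_div_cancel_right)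
  ultimately show ?thesis using E_0 by (simp add: tendsto_cong)
qed

lemma E_ge1: assumes "0 < q" "q < 1" "0 \<le> b" shows "1 \<le> E q b"
proof (rule LIMSEQ_le_const[OF E_lim[OF assms(1,2)]])
  show "\<exists>N. \<forall>n\<ge>N. 1 \<le> (\<Prod>m<n. 1 + b * q ^ m)"
    using assms by (intro exI[of _ 0] allI impI prod_ge_1) auto
qed

lemma E_nonneg: assumes "0 < q" "q < 1" "-1 \<le> b" "b \<le> 0" shows "0 \<le> E q b"
proof (rule LIMSEQ_le_const[OF E_lim[OF assms(1,2)]])
  have "\<And>m. 0 \<le> 1 + b * q ^ m"
  proof -
    fix m :: nat
    have "q ^ m \<le> 1" "0 \<le> q ^ m" using assms by (auto intro: power_le_one)
    then have "b * 1 \<le> b * q ^ m" using assms by (intro mult_left_mono_neg) auto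
    then have "-1 \<le> b * q ^ m" using assms by simp
    then show "0 \<le> 1 + b * q ^ m" by simp
  qed
  then show "\<exists>N. \<forall>n\<ge>N. 0 \<le> (\<Prod>m<n. 1 + b * q ^ m)"
    by (intro exI[of _ 0] allI impI prod_nonneg) auto
qed

lemma qpoch_E: assumes "0 < q" "q < 1" "E q b \<noteq> 0"
  shows "qpoch_inf (complex_of_real (- b)) q = complex_of_real (E q b)"
proof -
  have "(\<lambda>M. complex_of_real (\<Prod>m<M. 1 + b * q ^ m)) \<longlonglongrightarrow> complex_of_real (E q b)"
    by (intro tendsto_of_real E_lim[OF assms(1,2)])
  then have "(\<lambda>M. \<Prod>m<M. 1 - complex_of_real (- b) * complex_of_real (q ^ m)) \<longlonglongrightarrow> complex_of_real (E q b)"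
    by simp
  then show ?thesis unfolding qpoch_inf_def using assms(3)
    by (intro prodinf_eq_prod_lim') auto
qed

lemma alg1: fixes yA yu yv yq yP yQ yR :: real
  assumes "yP \<noteq> 0" "yQ \<noteq> 0" "yR \<noteq> 0" "1 - yq*yu \<noteq> 0" "1 - yq*yv \<noteq> 0"
  shows "(1 - yq*yq*yu*yv) * (-(yA*yu) / ((yP*(1-yq*yu))*(yQ*(1-yq*yv))*yR)) = -(yA*yu) / ((yP*(1-yq*yu))*yQ*yR) + - (yq*yu*yv * (yA / (yP*(yQ*(1-yq*yv))*yR)))"
  using assms by (simp add: divide_simps) (simp add: algebra_simps)
lemma alg0: fixes yA yu yq yP yR :: real
  assumes "yP \<noteq> 0" "yR \<noteq> 0" "1 - yq*yu \<noteq> 0"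
  shows "(1 - yq*yu) * (-(yA*yu) / ((yP*(1-yq*yu))*yR)) = 0 + - (yu * (yA / (yP*yR)))"
  using assms by (simp add: divide_simps)
lemma alg2: fixes yx yu yv yq yP yQ :: real
  assumes "yP \<noteq> 0" "yQ \<noteq> 0" "1 - yq*yu \<noteq> 0" "1 - yq*yv \<noteq> 0"
  shows "( yx*yu / (yP*(yQ*(1-yq*yv))) - yu*(yx/(yP*yQ)) ) / (1 - yq*yu) = yx*yu*yv*yq / ((yP*(1-yq*yu))*(yQ*(1-yq*yv)))"
  using assms by (simp add: divide_simps) (simp add: algebra_simps)

definition tq :: "real \<Rightarrow> nat \<Rightarrow> nat \<Rightarrow> nat \<Rightarrow> real" where
  "tq q I J l = (if l \<le> I \<and> l \<le> J then (-1)^l * q ^ tri l / (qp q l * qp q (I - l) * qp q (J - l)) else 0)"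

lemma one_minus_qpow_pos: assumes "0 < (q::real)" "q < 1" shows "0 < 1 - q ^ Suc n"
  using power_Suc_less_one[OF assms, of n] by simp

lemma tq_rec: assumes q: "0 < q" "q < 1"
  shows "(1 - q ^ Suc I) * tq q (Suc I) (Suc J) l = tq q I (Suc J) l + (if l = 0 then 0 else - (q ^ I * tq q I J (l - 1)))"
proof (cases l)
  case 0
  have "qp q I \<noteq> 0" using qp_pos[OF q, of I] by simp
  moreover have "qp q (Suc J) \<noteq> 0" using qp_pos[OF q, of "Suc J"] by simp
  moreover have "1 - q ^ Suc I \<noteq> 0" using one_minus_qpow_pos[OF q, of I] by simp
  ultimately show ?thesis using 0 by (simp add: tq_def qp_Suc del: power_Suc)
next
  case (Suc a)
  show ?thesis
  proof (cases "a \<le> I \<and> a \<le> J")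
    case False
    then show ?thesis using Suc by (auto simp: tq_def)
  next
    case True
    then obtain e where e: "J = a + e" using le_Suc_ex by blast
    have qpa: "qp q a > 0" "qp q e > 0" using qp_pos[OF q] by auto
    have u1: "1 - q * q ^ a > 0" using one_minus_qpow_pos[OF q, of a] by simp
    define Aa where "Aa = (-1::real)^a * q ^ tri a"
    define u where "u = q ^ a"
    show ?thesis
    proof (cases "a = I")
      case True
      have A: "tq q (Suc I) (Suc J) l = -(Aa*u)/((qp q a*(1-q*u))*qp q e)"
        using Suc True e by (simp add: tq_def qp_Suc Aa_def u_def power_add mult_ac)
      have B: "tq q I (Suc J) l = 0" using Suc True by (simp add: tq_def)
      have C: "(if l = 0 then 0 else - (q ^ I * tq q I J (l - 1))) = - (u * (Aa / (qp q a * qp q e)))"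
        using Suc True e by (simp add: tq_def Aa_def u_def)
      have D: "q ^ Suc I = q * u" using True by (simp add: u_def)
      show ?thesis unfolding A B C D
        by (rule alg0) (use qpa u1 in \<open>auto simp: u_def\<close>)
    next
      case False
      with True obtain d where d: "I = a + Suc d" by (metis add_Suc_right le_neq_implies_less less_imp_Suc_add)
      define v where "v = q ^ d"
      have qpd: "qp q d > 0" using qp_pos[OF q] by auto
      have v1: "1 - q * q ^ d > 0" using one_minus_qpow_pos[OF q, of d] by simp
      have i1: "Suc I - Suc a = Suc d" "I - Suc a = d" "Suc J - Suc a = e" "I - a = Suc d" "J - a = e"
        using d e by auto
      have A: "tq q (Suc I) (Suc J) l = -(Aa*u) / ((qp q a*(1-q*u))*(qp q d*(1-q* v))*qp q e)"
        using Suc True d e i1 by (simp add: tq_def qp_Suc Aa_def u_def v_def power_add mult_ac)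
      have B: "tq q I (Suc J) l = -(Aa*u) / ((qp q a*(1-q*u))*qp q d*qp q e)"
        using Suc True d e i1 by (simp add: tq_def qp_Suc Aa_def u_def v_def power_add mult_ac)
      have C: "(if l = 0 then 0 else - (q ^ I * tq q I J (l - 1))) = - (q*u* v * (Aa / (qp q a*(qp q d*(1-q* v))*qp q e)))"
        using Suc True d e i1 by (simp add: tq_def qp_Suc Aa_def u_def v_def power_add mult_ac)
      have D: "q ^ Suc I = q*q*u* v" using d by (simp add: u_def v_def power_add)
      show ?thesis unfolding A B C D
        by (rule alg1) (use qpa qpd u1 v1 in \<open>auto simp: u_def v_def\<close>)
    qed
  qed
qed

lemma tq_sum: assumes q: "0 < q" "q < 1"
  shows "(\<Sum>l\<le>I. tq q I J l) = q ^ (I * J) / (qp q I * qp q J)"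
proof (induction I arbitrary: J)
  case 0
  then show ?case by (simp add: tq_def)
next
  case (Suc I)
  show ?case
  proof (cases J)
    case 0
    then show ?thesis by (simp add: sum.atMost_Suc_shift tq_def del: sum.atMost_Suc)
  next
    case (Suc J')
    have "(1 - q ^ Suc I) * (\<Sum>l\<le>Suc I. tq q (Suc I) J l)
        = (\<Sum>l\<le>Suc I. tq q I (Suc J') l) + (\<Sum>l\<le>Suc I. (if l = 0 then 0 else - (q ^ I * tq q I J' (l - 1))))"
      unfolding sum_distrib_left Suc tq_rec[OF q] sum.distrib by simp
    also have "(\<Sum>l\<le>Suc I. tq q I (Suc J') l) = (\<Sum>l\<le>I. tq q I (Suc J') l)"
      by (simp add: tq_def)
    also have "(\<Sum>l\<le>Suc I. (if l = 0 then 0 else - (q ^ I * tq q I J' (l - 1)))) = - (q ^ I * (\<Sum>l\<le>I. tq q I J' l))"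
      by (simp add: sum.atMost_Suc_shift sum_distrib_left sum_negf del: sum.atMost_Suc)
    finally have X: "(1 - q ^ Suc I) * (\<Sum>l\<le>Suc I. tq q (Suc I) J l) =
       q ^ (I * Suc J') / (qp q I * qp q (Suc J')) - q ^ I * (q ^ (I * J') / (qp q I * qp q J'))"
      using Suc.IH by simp
    have p: "qp q I > 0" "qp q J' > 0" using qp_pos[OF q] by auto
    have u: "1 - q * q ^ I > 0" "1 - q * q ^ J' > 0" using one_minus_qpow_pos[OF q] by auto
    have "(\<Sum>l\<le>Suc I. tq q (Suc I) J l) = (q ^ (I * Suc J') / (qp q I * qp q (Suc J')) - q ^ I * (q ^ (I * J') / (qp q I * qp q J'))) / (1 - q ^ Suc I)"
      using X u by (simp add: field_simps)
    also have "\<dots> = (q ^ (I*J') * q ^ I / (qp q I * (qp q J' * (1 - q * q ^ J'))) - q ^ I * (q ^ (I * J') / (qp q I * qp q J'))) / (1 - q * q ^ I)"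
      by (simp add: qp_Suc power_add)
    also have "\<dots> = q ^ (I*J') * q ^ I * q ^ J' * q / ((qp q I * (1 - q * q ^ I)) * (qp q J' * (1 - q * q ^ J')))"
      by (rule alg2) (use p u in auto)
    also have "\<dots> = q ^ (Suc I * J) / (qp q (Suc I) * qp q J)"
      unfolding Suc by (simp add: qp_Suc power_add mult_ac)
    finally show ?thesis .
  qed
qed

lemma has_sum_prod:
  fixes f g :: "_ \<Rightarrow> real"
  assumes f: "(f has_sum F) A" and g: "(g has_sum G) B"
    and nf: "(\<lambda>x. norm (f x)) summable_on A" and ng: "(\<lambda>y. norm (g y)) summable_on B"
  shows "((\<lambda>(x,y). f x * g y) has_sum (F * G)) (A \<times> B)"
proof -
  have n: "(\<lambda>(x,y). norm (f x) * norm (g y)) summable_on (Sigma A (\<lambda>_. B))"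
  proof (rule summable_on_SigmaI[where g = "\<lambda>x. norm (f x) * infsum (\<lambda>y. norm (g y)) B"])
    fix x assume "x \<in> A"
    show "((\<lambda>y. case (x, y) of (x, y) \<Rightarrow> norm (f x) * norm (g y)) has_sum norm (f x) * infsum (\<lambda>y. norm (g y)) B) B"
      using has_sum_cmult_right[OF has_sum_infsum[OF ng]] by simp
  next
    show "(\<lambda>x. norm (f x) * infsum (\<lambda>y. norm (g y)) B) summable_on A"
      by (rule summable_on_cmult_left[OF nf])
  qed auto
  have "(\<lambda>z. norm ((\<lambda>(x,y). f x * g y) z)) summable_on (A \<times> B)"
  proof -
    have eq: "(\<lambda>z. norm ((\<lambda>(x,y). f x * g y) z)) = (\<lambda>(x,y). norm (f x) * norm (g y))"
      by (rule ext) (simp add: case_prod_unfold abs_mult)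
    show ?thesis unfolding eq by (rule n)
  qed
  then have s: "(\<lambda>(x,y). f x * g y) summable_on (Sigma A (\<lambda>_. B))"
    by (rule abs_summable_summable)
  show ?thesis
  proof (rule has_sum_SigmaI[where g = "\<lambda>x. f x * G"])
    fix x assume "x \<in> A"
    show "((\<lambda>y. case (x, y) of (x, y) \<Rightarrow> f x * g y) has_sum f x * G) B"
      using has_sum_cmult_right[OF g] by simp
  next
    show "((\<lambda>x. f x * G) has_sum F * G) A" by (rule has_sum_cmult_left[OF f])
  qed (use s in simp)
qed

definition phi :: "nat \<Rightarrow> real \<Rightarrow> real" where
  "phi N a = sqrt (2 ^ N / fact N) * exp (- (a\<^sup>2)) * a ^ N"

lemma gauss_expand: "((\<lambda>N. phi N a * phi N b) has_sum exp (- ((a - b)\<^sup>2))) UNIV"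
proof -
  have s: "(\<lambda>N. (2*a*b) ^ N /\<^sub>R fact N) sums exp (2*a*b)" by (rule exp_converges)
  have sn: "summable (\<lambda>N. norm ((2*a*b) ^ N /\<^sub>R fact N))"
  proof -
    have "(\<lambda>N. \<bar>2*a*b\<bar> ^ N /\<^sub>R fact N) sums exp \<bar>2*a*b\<bar>" by (rule exp_converges)
    then show ?thesis by (simp add: sums_iff power_abs abs_mult)
  qed
  have s2: "(\<lambda>N. exp (- (a\<^sup>2)) * exp (- (b\<^sup>2)) * ((2*a*b) ^ N /\<^sub>R fact N)) sums (exp (- (a\<^sup>2)) * exp (- (b\<^sup>2)) * exp (2*a*b))"
    by (rule sums_mult[OF s])
  have sn2: "summable (\<lambda>N. norm (exp (- (a\<^sup>2)) * exp (- (b\<^sup>2)) * ((2*a*b) ^ N /\<^sub>R fact N)))"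
    using summable_mult[OF sn, of "exp (- (a\<^sup>2)) * exp (- (b\<^sup>2))"] by (simp add: abs_mult)
  have eq: "exp (- (a\<^sup>2)) * exp (- (b\<^sup>2)) * ((2*a*b) ^ N /\<^sub>R fact N) = phi N a * phi N b" for N
  proof -
    have "sqrt (2 ^ N / fact N) * sqrt (2 ^ N / fact N) = (2 ^ N / fact N :: real)"
      by (simp add: real_sqrt_mult_self)
    then show ?thesis unfolding phi_def
      by (simp add: power_mult_distrib field_simps)
  qed
  have ee: "exp (- (a\<^sup>2)) * exp (- (b\<^sup>2)) * exp (2*a*b) = exp (- ((a - b)\<^sup>2))"
    by (simp add: exp_add[symmetric] power2_eq_square algebra_simps)
  show ?thesis using norm_summable_imp_has_sum[OF sn2 s2] unfolding eq ee .
qed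

lemma phi_abs: "\<bar>phi N a\<bar> = phi N \<bar>a\<bar>"
  by (simp add: phi_def abs_mult power_abs)

lemma phi_nonneg_abs: "0 \<le> phi N \<bar>a\<bar>"
  by (simp add: phi_def)

lemma phi_bound: "\<bar>phi N a\<bar> \<le> 1"
proof -
  have "sum (\<lambda>N. phi N a * phi N a) {N} \<le> exp (- ((a - a)\<^sup>2))"
    by (rule finite_sum_le_has_sum[OF gauss_expand]) auto
  then have "(phi N a)\<^sup>2 \<le> 1\<^sup>2" by (simp add: power2_eq_square)
  then show ?thesis using abs_le_square_iff[of "phi N a" 1] by simp
qed

lemma wf_summable:
  fixes w :: "nat \<Rightarrow> real" and h :: "nat \<Rightarrow> real"
  assumes w0: "\<And>i. 0 \<le> w i" and ws: "w summable_on UNIV" and hb: "\<And>i. \<bar>h i\<bar> \<le> 1"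
  shows "(\<lambda>i. norm (w i * h i)) summable_on UNIV" "(\<lambda>i. w i * h i) summable_on UNIV"
proof -
  show n: "(\<lambda>i. norm (w i * h i)) summable_on UNIV"
  proof (rule Infinite_Sum.abs_summable_on_comparison_test'[OF ws])
    fix i show "norm (w i * h i) \<le> w i"
      using w0[of i] hb[of i] by (simp add: abs_mult mult_left_le)
  qed
  then show "(\<lambda>i. w i * h i) summable_on UNIV" by (rule abs_summable_summable)
qed

lemma rank_one:
  fixes w :: "nat \<Rightarrow> real" and A B :: "nat \<Rightarrow> real"
  assumes w0: "\<And>i. 0 \<le> w i" and ws: "w summable_on UNIV"
  shows "((\<lambda>N. infsum (\<lambda>i. w i * phi N (A i)) UNIV * infsum (\<lambda>l. w l * phi N (B l)) UNIV)
           has_sum infsum (\<lambda>(i,l). w i * w l * exp (- ((A i - B l)\<^sup>2))) UNIV) UNIV"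
proof -
  define S where "S = infsum (\<lambda>(i,l). w i * w l * exp (- ((A i - B l)\<^sup>2))) UNIV"
  have wn: "(\<lambda>i. norm (w i)) summable_on UNIV" using ws w0 by simp
  have ww: "(\<lambda>(i,l). w i * w l) summable_on (UNIV \<times> UNIV)"
    using has_sum_prod[OF has_sum_infsum[OF ws] has_sum_infsum[OF ws] wn wn] summable_on_def by blast
  have Gs: "(\<lambda>(i,l). w i * w l * exp (- ((A i - B l)\<^sup>2))) summable_on (UNIV \<times> UNIV)"
  proof (rule summable_on_comparison_test[OF ww])
    fix z :: "nat \<times> nat"
    obtain i l where z: "z = (i,l)" by fastforce
    have "exp (- ((A i - B l)\<^sup>2)) \<le> 1" by simp
    then show "(case z of (i, l) \<Rightarrow> w i * w l * exp (- (A i - B l)\<^sup>2)) \<le> (case z of (i, l) \<Rightarrow> w i * w l)"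
      using w0[of i] w0[of l] z by (simp add: mult_left_le)
    show "0 \<le> (case z of (i, l) \<Rightarrow> w i * w l * exp (- (A i - B l)\<^sup>2))"
      using w0[of i] w0[of l] z by simp
  qed
  define F where "F = (\<lambda>((i,l),N). w i * w l * (phi N (A i) * phi N (B l)))"
  have nF: "(\<lambda>z. norm (F z)) = (\<lambda>((i,l),N). w i * w l * (phi N \<bar>A i\<bar> * phi N \<bar>B l\<bar>))"
    by (rule ext) (simp add: F_def case_prod_unfold abs_mult phi_abs w0)
  have Gs': "(\<lambda>(i,l). w i * w l * exp (- ((\<bar>A i\<bar> - \<bar>B l\<bar>)\<^sup>2))) summable_on (UNIV \<times> UNIV)"
  proof (rule summable_on_comparison_test[OF ww])
    fix z :: "nat \<times> nat"
    obtain i l where z: "z = (i,l)" by fastforce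
    have "exp (- ((\<bar>A i\<bar> - \<bar>B l\<bar>)\<^sup>2)) \<le> 1" by simp
    then show "(case z of (i, l) \<Rightarrow> w i * w l * exp (- (\<bar>A i\<bar> - \<bar>B l\<bar>)\<^sup>2)) \<le> (case z of (i, l) \<Rightarrow> w i * w l)"
      using w0[of i] w0[of l] z by (simp add: mult_left_le)
    show "0 \<le> (case z of (i, l) \<Rightarrow> w i * w l * exp (- (\<bar>A i\<bar> - \<bar>B l\<bar>)\<^sup>2))"
      using w0[of i] w0[of l] z by simp
  qed
  have "(\<lambda>((i,l),N). w i * w l * (phi N \<bar>A i\<bar> * phi N \<bar>B l\<bar>)) summable_on (Sigma (UNIV \<times> UNIV) (\<lambda>_. UNIV))"
  proof (rule summable_on_SigmaI[where g = "\<lambda>(i,l). w i * w l * exp (- ((\<bar>A i\<bar> - \<bar>B l\<bar>)\<^sup>2))"])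
    fix z :: "nat \<times> nat"
    obtain i l where z: "z = (i,l)" by fastforce
    show "((\<lambda>y. case (z, y) of (x, xa) \<Rightarrow> (case x of (i, l) \<Rightarrow> \<lambda>N. w i * w l * (phi N \<bar>A i\<bar> * phi N \<bar>B l\<bar>)) xa) has_sum
          (case z of (i, l) \<Rightarrow> w i * w l * exp (- (\<bar>A i\<bar> - \<bar>B l\<bar>)\<^sup>2))) UNIV"
      using has_sum_cmult_right[OF gauss_expand[of "\<bar>A i\<bar>" "\<bar>B l\<bar>"], of "w i * w l"] z by simp
  next
    show "(\<lambda>(i,l). w i * w l * exp (- ((\<bar>A i\<bar> - \<bar>B l\<bar>)\<^sup>2))) summable_on (UNIV \<times> UNIV)" by (rule Gs')
  next
    fix z :: "nat \<times> nat" and N :: nat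
    obtain i l where z: "z = (i,l)" by fastforce
    show "0 \<le> (case (z, N) of (x, xa) \<Rightarrow> (case x of (i, l) \<Rightarrow> \<lambda>N. w i * w l * (phi N \<bar>A i\<bar> * phi N \<bar>B l\<bar>)) xa)"
      using z w0[of i] w0[of l] phi_nonneg_abs by simp
  qed
  then have "(\<lambda>z. norm (F z)) summable_on ((UNIV \<times> UNIV) \<times> UNIV)" unfolding nF by simp
  then have Fs: "F summable_on ((UNIV \<times> UNIV) \<times> UNIV)" by (rule abs_summable_summable)
  have Fh: "(F has_sum S) (Sigma (UNIV \<times> UNIV) (\<lambda>_. UNIV))"
  proof (rule has_sum_SigmaI[where g = "\<lambda>(i,l). w i * w l * exp (- ((A i - B l)\<^sup>2))"])
    fix z :: "nat \<times> nat"
    obtain i l where z: "z = (i,l)" by fastforce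
    show "((\<lambda>y. F (z, y)) has_sum (case z of (i, l) \<Rightarrow> w i * w l * exp (- (A i - B l)\<^sup>2))) UNIV"
      using has_sum_cmult_right[OF gauss_expand[of "A i" "B l"], of "w i * w l"] z by (simp add: F_def)
  next
    show "((\<lambda>(i,l). w i * w l * exp (- ((A i - B l)\<^sup>2))) has_sum S) (UNIV \<times> UNIV)"
      unfolding S_def using has_sum_infsum[OF Gs] by simp
  qed (use Fs in simp)
  then have Fh': "((\<lambda>(N,z). F (z,N)) has_sum S) (UNIV \<times> (UNIV \<times> UNIV))"
    using has_sum_swap by blast
  show ?thesis unfolding S_def[symmetric]
  proof (rule has_sum_Sigma'[OF Fh'[unfolded case_prod_unfold]])
    fix N :: nat
    define f where "f i = w i * phi N (A i)" for i
    define g where "g l = w l * phi N (B l)" for l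
    have fs: "(\<lambda>i. norm (f i)) summable_on UNIV" "f summable_on UNIV"
      unfolding f_def using wf_summable[OF w0 ws, of "\<lambda>i. phi N (A i)"] phi_bound by auto
    have gs: "(\<lambda>i. norm (g i)) summable_on UNIV" "g summable_on UNIV"
      unfolding g_def using wf_summable[OF w0 ws, of "\<lambda>i. phi N (B i)"] phi_bound by auto
    have "((\<lambda>(i,l). f i * g l) has_sum (infsum f UNIV * infsum g UNIV)) (UNIV \<times> UNIV)"
      by (rule has_sum_prod[OF has_sum_infsum[OF fs(2)] has_sum_infsum[OF gs(2)] fs(1) gs(1)])
    moreover have "(\<lambda>(i,l). f i * g l) = (\<lambda>y. F (snd (N, y), fst (N, y)))"
      by (rule ext) (simp add: F_def f_def g_def case_prod_unfold mult_ac)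
    ultimately show "((\<lambda>y. F (snd (N, y), fst (N, y))) has_sum
          infsum (\<lambda>i. w i * phi N (A i)) UNIV * infsum (\<lambda>l. w l * phi N (B l)) UNIV) (UNIV \<times> UNIV)"
      unfolding f_def g_def by simp
  qed
qed

definition ww :: "real \<Rightarrow> real \<Rightarrow> nat \<Rightarrow> real" where "ww c q i = c ^ i / qp q i"

lemma ww_nonneg: assumes "0 < q" "q < 1" "0 \<le> c" shows "0 \<le> ww c q i"
  unfolding ww_def using qp_pos[OF assms(1,2), of i] assms by simp

lemma ww_summable: assumes q: "0 < q" "q < 1" and c: "0 \<le> c" "c < 1"
  shows "summable (ww c q)"
proof -
  have "(\<lambda>n. q ^ n) \<longlonglongrightarrow> 0" using q by (intro LIMSEQ_power_zero) auto
  moreover have "0 < (1 - c) / (1 + c)" using c by simp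
  ultimately have "eventually (\<lambda>n. q ^ n < (1 - c) / (1 + c)) sequentially"
    by (intro order_tendstoD) auto
  then obtain N where N: "\<And>n. n \<ge> N \<Longrightarrow> q ^ n < (1 - c) / (1 + c)"
    unfolding eventually_sequentially by blast
  show ?thesis
  proof (rule summable_ratio_test[of "(1 + c) / 2" N])
    show "(1 + c) / 2 < 1" using c by simp
  next
    fix n assume n: "N \<le> n"
    have qn: "q ^ Suc n < (1 - c) / (1 + c)" using N[of "Suc n"] n by simp
    have pos: "0 < 1 - q ^ Suc n" using power_Suc_less_one[OF q, of n] by simp
    have key: "c \<le> (1 + c) / 2 * (1 - q ^ Suc n)"
    proof -
      have "q ^ Suc n * (1 + c) < 1 - c" using qn c by (simp add: field_simps)
      then show ?thesis by (simp add: algebra_simps)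
    qed
    have e: "ww c q (Suc n) = ww c q n * (c / (1 - q ^ Suc n))"
      unfolding ww_def qp_Suc using pos by (simp add: field_simps)
    have "ww c q (Suc n) \<le> ww c q n * ((1 + c) / 2)"
      unfolding e using ww_nonneg[OF q c(1), of n] pos key
      by (intro mult_left_mono) (auto simp: divide_le_eq)
    then show "norm (ww c q (Suc n)) \<le> (1 + c) / 2 * norm (ww c q n)"
      using ww_nonneg[OF q c(1)] by (simp add: mult.commute)
  qed
qed

lemma ww_summable_on: assumes q: "0 < q" "q < 1" and c: "0 \<le> c" "c < 1"
  shows "ww c q summable_on UNIV"
  using ww_summable[OF assms] ww_nonneg[OF q c(1)] summable_on_UNIV_nonneg_real_iff by blast

lemma term_eq:
  fixes c k x :: real and i l :: nat
  assumes q: "q = exp (- 2 * k\<^sup>2)"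
  shows "exp (- x\<^sup>2) * (ea q i * (c * exp (- k\<^sup>2 - 2 * x * k)) ^ i) * (ea q l * (c * exp (- k\<^sup>2 + 2 * x * k)) ^ l)
       = ww c q i * ww c q l * q ^ (i * l) * exp (- ((x + k * (real i - real l))\<^sup>2))"
proof -
  have pw: "q ^ n = exp (real n * (- 2 * k\<^sup>2))" for n
    using exp_of_nat_mult[of n "- 2 * k\<^sup>2"] unfolding q by simp
  have p1: "exp (- k\<^sup>2 - 2 * x * k) ^ i = exp (real i * (- k\<^sup>2 - 2 * x * k))" by (simp add: exp_of_nat_mult)
  have p2: "exp (- k\<^sup>2 + 2 * x * k) ^ l = exp (real l * (- k\<^sup>2 + 2 * x * k))" by (simp add: exp_of_nat_mult)
  have L0: "exp (- x\<^sup>2) * (ea q i * (c * exp (- k\<^sup>2 - 2 * x * k)) ^ i) * (ea q l * (c * exp (- k\<^sup>2 + 2 * x * k)) ^ l)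
      = ww c q i * ww c q l * (exp (- x\<^sup>2) * exp (real (tri i) * (- 2 * k\<^sup>2)) * exp (real i * (- k\<^sup>2 - 2 * x * k))
           * exp (real (tri l) * (- 2 * k\<^sup>2)) * exp (real l * (- k\<^sup>2 + 2 * x * k)))"
    unfolding ea_def ww_def power_mult_distrib p1 p2 pw by (simp add: field_simps)
  have e5: "\<And>a b c d e :: real. exp a * exp b * exp c * exp d * exp e = exp (a + b + c + d + e)"
    by (simp add: exp_add)
  have L: "exp (- x\<^sup>2) * (ea q i * (c * exp (- k\<^sup>2 - 2 * x * k)) ^ i) * (ea q l * (c * exp (- k\<^sup>2 + 2 * x * k)) ^ l)
      = ww c q i * ww c q l * exp (- x\<^sup>2 + real (tri i) * (- 2 * k\<^sup>2) + real i * (- k\<^sup>2 - 2 * x * k)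
           + real (tri l) * (- 2 * k\<^sup>2) + real l * (- k\<^sup>2 + 2 * x * k))"
    unfolding L0 e5 ..
  have R: "ww c q i * ww c q l * q ^ (i * l) * exp (- ((x + k * (real i - real l))\<^sup>2))
      = ww c q i * ww c q l * exp (real (i * l) * (- 2 * k\<^sup>2) - ((x + k * (real i - real l))\<^sup>2))"
    unfolding pw by (simp add: exp_add[symmetric] exp_diff field_simps)
  have "- x\<^sup>2 + real (tri i) * (- 2 * k\<^sup>2) + real i * (- k\<^sup>2 - 2 * x * k)
           + real (tri l) * (- 2 * k\<^sup>2) + real l * (- k\<^sup>2 + 2 * x * k)
       = real (i * l) * (- 2 * k\<^sup>2) - ((x + k * (real i - real l))\<^sup>2)"
  proof -
    have "real (tri i) * (- 2 * k\<^sup>2) = - k\<^sup>2 * (real i * (real i - 1))"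
    proof -
      have "real (tri i) * (- 2 * k\<^sup>2) = - k\<^sup>2 * (2 * real (tri i))" by (simp add: algebra_simps)
      also have "\<dots> = - k\<^sup>2 * (real i * (real i - 1))" by (simp only: tri_real)
      finally show ?thesis .
    qed
    moreover have "real (tri l) * (- 2 * k\<^sup>2) = - k\<^sup>2 * (real l * (real l - 1))"
    proof -
      have "real (tri l) * (- 2 * k\<^sup>2) = - k\<^sup>2 * (2 * real (tri l))" by (simp add: algebra_simps)
      also have "\<dots> = - k\<^sup>2 * (real l * (real l - 1))" by (simp only: tri_real)
      finally show ?thesis .
    qed
    ultimately show ?thesis by (simp add: power2_eq_square algebra_simps)
  qed
  then show ?thesis unfolding L R by simp
qed


lemma Vterm:
  fixes c q :: real and I L m :: nat
  assumes q01: "0 < q" "q < 1" and m: "m \<le> I" "m \<le> L"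
  shows "ea q m * (- (c\<^sup>2)) ^ m * ww c q (I - m) * ww c q (L - m) = c ^ (I + L) * tq q I L m"
proof -
  have n: "- (c\<^sup>2) = ((-1) * c) * c" by (simp add: power2_eq_square)
  have p: "(- (c\<^sup>2)) ^ m = (-1) ^ m * c ^ m * c ^ m" unfolding n by (simp only: power_mult_distrib)
  have cI: "c ^ I = c ^ (I - m) * c ^ m" using m by (simp add: power_add[symmetric])
  have cL: "c ^ L = c ^ (L - m) * c ^ m" using m by (simp add: power_add[symmetric])
  have qp: "qp q m > 0" "qp q (I - m) > 0" "qp q (L - m) > 0" using qp_pos[OF q01] by auto
  show ?thesis unfolding p power_add cI cL ea_def ww_def tq_def using m qp
    by (simp add: field_simps)
qed

lemma main_id:
  fixes c k x :: real
  assumes c: "0 < c" "c < 1" and k: "0 < k" and q: "q = exp (- 2 * k\<^sup>2)"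
  shows "exp (- x\<^sup>2) * E q (c * exp (- k\<^sup>2 - 2 * x * k)) * E q (c * exp (- k\<^sup>2 + 2 * x * k))
       = E q (- (c\<^sup>2)) * infsum (\<lambda>(i,l). ww c q i * ww c q l * exp (- ((x + k * (real i - real l))\<^sup>2))) UNIV"
proof -
  have q01: "0 < q" "q < 1" using k unfolding q by auto
  define b1 where "b1 = c * exp (- k\<^sup>2 - 2 * x * k)"
  define b2 where "b2 = c * exp (- k\<^sup>2 + 2 * x * k)"
  define w where "w = ww c q"
  define G where "G = (\<lambda>(i::nat,l::nat). exp (- ((x + k * (real i - real l))\<^sup>2)))"
  have b0: "0 < b1" "0 < b2" using c by (auto simp: b1_def b2_def)
  have w0: "\<And>i. 0 \<le> w i" unfolding w_def using ww_nonneg[OF q01] c by auto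
  have ws: "w summable_on UNIV" unfolding w_def using ww_summable_on[OF q01] c by auto
  have wn: "(\<lambda>i. norm (w i)) summable_on UNIV" using ws w0 by simp
  have wwp: "(\<lambda>(i,l). w i * w l) summable_on (UNIV \<times> UNIV)"
    using has_sum_prod[OF has_sum_infsum[OF ws] has_sum_infsum[OF ws] wn wn] summable_on_def by blast
  have G01: "0 \<le> G z" "G z \<le> 1" for z by (auto simp: G_def case_prod_unfold)
  have fh: "((\<lambda>i. ea q i * b ^ i) has_sum E q b) UNIV" if "0 < b" for b
    by (rule sums_nonneg_imp_has_sum[OF E_sums[OF q01]])
       (use that in \<open>auto intro!: mult_nonneg_nonneg ea_nonneg[OF q01]\<close>)
  have fn: "(\<lambda>i. norm (ea q i * b ^ i)) summable_on UNIV" for b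
    using ea_summable_norm[OF q01, of b] by (subst summable_on_UNIV_nonneg_real_iff) auto
  define T1 where "T1 = (\<lambda>(i,l). w i * w l * q ^ (i * l) * G (i,l))"
  have A0: "((\<lambda>z. exp (- x\<^sup>2) * (case z of (i,l) \<Rightarrow> (ea q i * b1 ^ i) * (ea q l * b2 ^ l))) has_sum exp (- x\<^sup>2) * (E q b1 * E q b2)) (UNIV \<times> UNIV)"
    by (rule has_sum_cmult_right[OF has_sum_prod[OF fh[OF b0(1)] fh[OF b0(2)] fn fn]])
  have "(\<lambda>z. exp (- x\<^sup>2) * (case z of (i,l) \<Rightarrow> (ea q i * b1 ^ i) * (ea q l * b2 ^ l))) = T1"
  proof (rule ext)
    fix z :: "nat \<times> nat"
    obtain i l where z: "z = (i,l)" by fastforce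
    show "exp (- x\<^sup>2) * (case z of (i,l) \<Rightarrow> (ea q i * b1 ^ i) * (ea q l * b2 ^ l)) = T1 z"
      using term_eq[OF q, of x i c l] unfolding z T1_def G_def w_def b1_def b2_def by (simp add: mult.assoc)
  qed
  with A0 have A: "(T1 has_sum exp (- x\<^sup>2) * (E q b1 * E q b2)) (UNIV \<times> UNIV)" by simp
  define S where "S = infsum (\<lambda>(i,l). w i * w l * G (i,l)) UNIV"
  define e where "e m = ea q m * (- (c\<^sup>2)) ^ m" for m
  have eh: "(e has_sum E q (- (c\<^sup>2))) UNIV"
    unfolding e_def by (rule norm_summable_imp_has_sum[OF ea_summable_norm[OF q01] E_sums[OF q01]])
  have en: "(\<lambda>m. norm (e m)) summable_on UNIV"
    unfolding e_def using fn .
  have Gs: "(\<lambda>(i,l). w i * w l * G (i,l)) summable_on (UNIV \<times> UNIV)"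
  proof (rule summable_on_comparison_test[OF wwp])
    fix z :: "nat \<times> nat"
    obtain i l where z: "z = (i,l)" by fastforce
    show "(case z of (i, l) \<Rightarrow> w i * w l * G (i, l)) \<le> (case z of (i, l) \<Rightarrow> w i * w l)"
      using w0[of i] w0[of l] G01[of z] z by (simp add: mult_left_le)
    show "0 \<le> (case z of (i, l) \<Rightarrow> w i * w l * G (i, l))"
      using w0[of i] w0[of l] G01[of z] z by simp
  qed
  have Gh: "((\<lambda>(i,l). w i * w l * G (i,l)) has_sum S) (UNIV \<times> UNIV)"
    unfolding S_def using has_sum_infsum[OF Gs] by simp
  have Gn: "(\<lambda>z. norm ((\<lambda>(i,l). w i * w l * G (i,l)) z)) summable_on (UNIV \<times> UNIV)"
  proof -
    have "(\<lambda>z. norm ((\<lambda>(i,l). w i * w l * G (i,l)) z)) = (\<lambda>(i,l). w i * w l * G (i,l))"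
      by (rule ext) (simp add: case_prod_unfold w0 G01)
    then show ?thesis using Gs by simp
  qed
  have U: "((\<lambda>(m,p). e m * (case p of (i,l) \<Rightarrow> w i * w l * G (i,l))) has_sum E q (- (c\<^sup>2)) * S) (UNIV \<times> (UNIV \<times> UNIV))"
    by (rule has_sum_prod[OF eh Gh en Gn])
  define V where "V = (\<lambda>(p::nat\<times>nat, m::nat). e m * w (fst p - m) * w (snd p - m) * G p)"
  define D where "D = Sigma (UNIV::(nat\<times>nat) set) (\<lambda>p. {..min (fst p) (snd p)})"
  have "((\<lambda>(m,p). e m * (case p of (i,l) \<Rightarrow> w i * w l * G (i,l))) has_sum E q (- (c\<^sup>2)) * S) (UNIV \<times> (UNIV \<times> UNIV))
        = (V has_sum E q (- (c\<^sup>2)) * S) D"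
    by (rule has_sum_reindex_bij_witness[where j = "\<lambda>(m,(i,l)). ((i+m,l+m),m)" and i = "\<lambda>((i,l),m). (m,(i-m,l-m))"])
       (auto simp: D_def V_def G_def)
  with U have Vh: "(V has_sum E q (- (c\<^sup>2)) * S) D" by simp
  have Vo: "((\<lambda>p. \<Sum>m\<in>{..min (fst p) (snd p)}. V (p,m)) has_sum E q (- (c\<^sup>2)) * S) UNIV"
    by (rule has_sum_Sigma'[OF Vh[unfolded D_def]]) (rule has_sum_finite, simp)
  have "(\<lambda>p. \<Sum>m\<in>{..min (fst p) (snd p)}. V (p,m)) = T1"
  proof (rule ext)
    fix p :: "nat \<times> nat"
    obtain I L where p: "p = (I,L)" by fastforce
    have "(\<Sum>m\<in>{..min I L}. V (p,m)) = (\<Sum>m\<in>{..min I L}. c ^ (I + L) * G p * tq q I L m)"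
    proof (rule sum.cong[OF refl])
      fix m assume "m \<in> {..min I L}"
      then have m: "m \<le> I" "m \<le> L" by auto
      show "V (p,m) = c ^ (I + L) * G p * tq q I L m"
        using Vterm[OF q01 m, of c] unfolding V_def p e_def w_def by (simp add: mult_ac)
    qed
    also have "\<dots> = c ^ (I + L) * G p * (\<Sum>m\<in>{..min I L}. tq q I L m)"
      by (simp add: sum_distrib_left)
    also have "(\<Sum>m\<in>{..min I L}. tq q I L m) = (\<Sum>m\<in>{..I}. tq q I L m)"
      by (rule sum.mono_neutral_left) (auto simp: tq_def)
    also have "\<dots> = q ^ (I * L) / (qp q I * qp q L)" by (rule tq_sum[OF q01])
    finally show "(\<Sum>m\<in>{..min (fst p) (snd p)}. V (p,m)) = T1 p"
      unfolding p T1_def w_def ww_def by (simp add: power_add field_simps)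
  qed
  with Vo have B: "(T1 has_sum E q (- (c\<^sup>2)) * S) UNIV" by simp
  from A B have "exp (- x\<^sup>2) * (E q b1 * E q b2) = E q (- (c\<^sup>2)) * S"
    using has_sum_unique by fastforce
  then show ?thesis unfolding S_def w_def G_def b1_def b2_def by (simp add: mult.assoc)
qed

lemma factor_rep:
  fixes c k :: real
  assumes c: "0 < c" "c < 1" and k: "0 < k" and q: "q = exp (- 2 * k\<^sup>2)"
  shows "\<exists>g. \<forall>x y. ((\<lambda>N::nat. g N x * g N y) has_sum
            (exp (- (x - y)\<^sup>2) * E q (c * exp (- k\<^sup>2 - 2 * (x - y) * k)) * E q (c * exp (- k\<^sup>2 + 2 * (x - y) * k)))) UNIV"
proof -
  have q01: "0 < q" "q < 1" using k unfolding q by auto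
  define P where "P = E q (- (c\<^sup>2))"
  have P0: "0 \<le> P" unfolding P_def
  proof (rule E_nonneg[OF q01])
    have "c\<^sup>2 \<le> 1" using c by (simp add: power_le_one)
    then show "-1 \<le> - (c\<^sup>2)" by simp
  qed simp
  define w where "w = ww c q"
  have w0: "\<And>i. 0 \<le> w i" unfolding w_def using ww_nonneg[OF q01] c by auto
  have ws: "w summable_on UNIV" unfolding w_def using ww_summable_on[OF q01] c by auto
  define g where "g N x = sqrt P * infsum (\<lambda>i. w i * phi N (x + k * real i)) UNIV" for N x
  show ?thesis
  proof (rule exI[where x = g], intro allI)
    fix x y :: real
    have R: "((\<lambda>N. infsum (\<lambda>i. w i * phi N (x + k * real i)) UNIV * infsum (\<lambda>l. w l * phi N (y + k * real l)) UNIV)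
           has_sum infsum (\<lambda>(i,l). w i * w l * exp (- (((x + k * real i) - (y + k * real l))\<^sup>2))) UNIV) UNIV"
      by (rule rank_one[OF w0 ws])
    have fam: "(\<lambda>(i,l). w i * w l * exp (- (((x + k * real i) - (y + k * real l))\<^sup>2))) =
               (\<lambda>(i,l). ww c q i * ww c q l * exp (- (((x - y) + k * (real i - real l))\<^sup>2)))"
      by (rule ext) (simp add: case_prod_unfold w_def algebra_simps)
    have "((\<lambda>N. P * (infsum (\<lambda>i. w i * phi N (x + k * real i)) UNIV * infsum (\<lambda>l. w l * phi N (y + k * real l)) UNIV))
           has_sum P * infsum (\<lambda>(i,l). ww c q i * ww c q l * exp (- (((x - y) + k * (real i - real l))\<^sup>2))) UNIV) UNIV"
      using has_sum_cmult_right[OF R, of P] unfolding fam .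
    moreover have "(\<lambda>N. P * (infsum (\<lambda>i. w i * phi N (x + k * real i)) UNIV * infsum (\<lambda>l. w l * phi N (y + k * real l)) UNIV)) = (\<lambda>N. g N x * g N y)"
    proof (rule ext)
      fix N
      have "sqrt P * sqrt P = P" using P0 by simp
      then show "P * (infsum (\<lambda>i. w i * phi N (x + k * real i)) UNIV * infsum (\<lambda>l. w l * phi N (y + k * real l)) UNIV) = g N x * g N y"
        unfolding g_def by (metis (no_types, lifting) mult.assoc mult.left_commute)
    qed
    moreover have "P * infsum (\<lambda>(i,l). ww c q i * ww c q l * exp (- (((x - y) + k * (real i - real l))\<^sup>2))) UNIV
        = exp (- (x - y)\<^sup>2) * E q (c * exp (- k\<^sup>2 - 2 * (x - y) * k)) * E q (c * exp (- k\<^sup>2 + 2 * (x - y) * k))"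
      using main_id[OF c k q, of "x - y"] unfolding P_def by simp
    ultimately show "((\<lambda>N. g N x * g N y) has_sum
            (exp (- (x - y)\<^sup>2) * E q (c * exp (- k\<^sup>2 - 2 * (x - y) * k)) * E q (c * exp (- k\<^sup>2 + 2 * (x - y) * k)))) UNIV"
      by simp
  qed
qed

definition pdk :: "(real \<Rightarrow> real \<Rightarrow> complex) \<Rightarrow> bool" where
  "pdk K \<longleftrightarrow> (\<forall>m (x::nat \<Rightarrow> real) v. 0 \<le> (\<Sum>r<m. \<Sum>s<m. cnj (v r) * K (x r) (x s) * v s))"

lemma pdk_one: "pdk (\<lambda>x y. 1)"
  unfolding pdk_def
proof (intro allI)
  fix m and x :: "nat \<Rightarrow> real" and v :: "nat \<Rightarrow> complex"
  have "(\<Sum>r<m. \<Sum>s<m. cnj (v r) * 1 * v s) = cnj (\<Sum>r<m. v r) * (\<Sum>s<m. v s)"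
    by (simp add: sum_product)
  also have "\<dots> = complex_of_real ((cmod (\<Sum>s<m. v s))\<^sup>2)"
    by (subst complex_norm_square) (rule mult.commute)
  also have "0 \<le> \<dots>" by (simp add: less_eq_complex_def)
  finally show "0 \<le> (\<Sum>r<m. \<Sum>s<m. cnj (v r) * (\<lambda>x y. 1) (x r) (x s) * v s)" by simp
qed

lemma has_sum_sum_fin:
  fixes f :: "'i \<Rightarrow> 'a \<Rightarrow> complex"
  assumes "finite F" "\<And>a. a \<in> F \<Longrightarrow> (f a has_sum s a) A"
  shows "((\<lambda>x. \<Sum>a\<in>F. f a x) has_sum (\<Sum>a\<in>F. s a)) A"
  using assms
proof (induction F rule: finite_induct)
  case empty then show ?case by simp
next
  case (insert a F)
  then show ?case by (simp add: has_sum_add)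
qed

lemma pdk_mult:
  assumes K: "pdk K" and h: "\<And>x y. ((\<lambda>N. g N x * g N y) has_sum h x y) UNIV"
  shows "pdk (\<lambda>x y. K x y * complex_of_real (h x y))"
  unfolding pdk_def
proof (intro allI)
  fix m and x :: "nat \<Rightarrow> real" and v :: "nat \<Rightarrow> complex"
  define Q where "Q N = (\<Sum>r<m. \<Sum>s<m. cnj (v r) * (K (x r) (x s) * complex_of_real (g N (x r) * g N (x s))) * v s)" for N
  have Qh: "(Q has_sum (\<Sum>r<m. \<Sum>s<m. cnj (v r) * (K (x r) (x s) * complex_of_real (h (x r) (x s))) * v s)) UNIV"
    unfolding Q_def
  proof (intro has_sum_sum_fin)
    fix r s
    have "((\<lambda>N. complex_of_real (g N (x r) * g N (x s))) has_sum complex_of_real (h (x r) (x s))) UNIV"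
      by (rule has_sum_of_real[OF h])
    from has_sum_cmult_left[OF has_sum_cmult_right[OF this, of "cnj (v r) * K (x r) (x s)"], of "v s"]
    show "((\<lambda>N. cnj (v r) * (K (x r) (x s) * complex_of_real (g N (x r) * g N (x s))) * v s) has_sum
          cnj (v r) * (K (x r) (x s) * complex_of_real (h (x r) (x s))) * v s) UNIV"
      by (simp add: mult.assoc)
  qed auto
  have Q0: "0 \<le> Q N" for N
  proof -
    define v' where "v' r = v r * complex_of_real (g N (x r))" for r
    have "Q N = (\<Sum>r<m. \<Sum>s<m. cnj (v' r) * K (x r) (x s) * v' s)"
      unfolding Q_def v'_def by (intro sum.cong refl) (simp add: mult_ac)
    then show ?thesis using K unfolding pdk_def by simp
  qed
  have "0 \<le> infsum Q UNIV"
    by (rule infsum_nonneg_complex) (use Qh Q0 in \<open>auto simp: summable_on_def\<close>)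
  then show "0 \<le> (\<Sum>r<m. \<Sum>s<m. cnj (v r) * (\<lambda>x y. K x y * complex_of_real (h x y)) (x r) (x s) * v s)"
    using infsumI[OF Qh] by simp
qed

lemma pdk_prod:
  assumes "finite J" and h: "\<And>j. j \<in> J \<Longrightarrow> \<forall>x y. ((\<lambda>N. g j N x * g j N y) has_sum h j x y) UNIV"
  shows "pdk (\<lambda>x y. \<Prod>j\<in>J. complex_of_real (h j x y))"
  using assms
proof (induction J rule: finite_induct)
  case empty then show ?case using pdk_one by simp
next
  case (insert a F)
  have "pdk (\<lambda>x y. (\<Prod>j\<in>F. complex_of_real (h j x y)) * complex_of_real (h a x y))"
    by (rule pdk_mult[where g = "g a"]) (use insert in auto)
  then show ?case using insert by (simp add: mult.commute)
qed

lemma qlist: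
  assumes "0 < q" "q < 1" "0 \<le> b1" "0 \<le> b2"
  shows "qpoch_inf_list [complex_of_real (- b1), complex_of_real (- b2)] q = complex_of_real (E q b1 * E q b2)"
proof -
  have "1 \<le> E q b1" "1 \<le> E q b2" using E_ge1[OF assms(1,2)] assms(3,4) by auto
  then have "E q b1 \<noteq> 0" "E q b2 \<noteq> 0" by auto
  then show ?thesis unfolding qpoch_inf_list_def using qpoch_E[OF assms(1,2)] by simp
qed

lemma sqrt_exp2: "sqrt (exp (- 2 * kk\<^sup>2)) = exp (- kk\<^sup>2)"
proof (rule real_sqrt_unique)
  show "(exp (- kk\<^sup>2))\<^sup>2 = exp (- 2 * kk\<^sup>2)"
    by (simp add: power2_eq_square exp_add[symmetric])
qed simp

lemma hh_le0:
  fixes g :: "nat \<Rightarrow> real \<Rightarrow> real" and f :: "real \<Rightarrow> real"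
  assumes "\<forall>x y. ((\<lambda>N::nat. g N x * g N y) has_sum f (x - y)) UNIV"
  shows "f t \<le> f 0"
proof -
  have a: "((\<lambda>N. g N t * g N t) has_sum f 0) UNIV" using assms[rule_format, of t t] by simp
  have b: "((\<lambda>N. g N 0 * g N 0) has_sum f 0) UNIV" using assms[rule_format, of 0 0] by simp
  have c: "((\<lambda>N. g N t * g N 0) has_sum f t) UNIV" using assms[rule_format, of t 0] by simp
  have "((\<lambda>N. g N t * g N t + g N 0 * g N 0 + (-2) * (g N t * g N 0)) has_sum f 0 + f 0 + (-2) * f t) UNIV"
    by (intro has_sum_add a b has_sum_cmult_right c)
  moreover have "(\<lambda>N. g N t * g N t + g N 0 * g N 0 + (-2) * (g N t * g N 0)) = (\<lambda>N. (g N t - g N 0)\<^sup>2)"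
    by (rule ext) (simp add: power2_eq_square algebra_simps)
  ultimately have "((\<lambda>N. (g N t - g N 0)\<^sup>2) has_sum f 0 + f 0 + (-2) * f t) UNIV" by simp
  then have "0 \<le> f 0 + f 0 + (-2) * f t" by (rule has_sum_nonneg) simp
  then show ?thesis by simp
qed

theorem theorem2p6:
  fixes n :: nat and c k :: "nat \<Rightarrow> real"
  assumes "\<And>j. 1 \<le> j \<Longrightarrow> j \<le> n \<Longrightarrow> 0 < c j \<and> c j < 1"
      and "\<And>j. 1 \<le> j \<Longrightarrow> j \<le> n \<Longrightarrow> 0 < k j"
  defines "q \<equiv> (\<lambda>j. exp (- 2 * (k j)\<^sup>2))"
  defines "H \<equiv> (\<lambda>x::real. \<Prod>j=1..n. complex_of_real (exp (- x\<^sup>2)) *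
              qpoch_inf_list [complex_of_real (- c j * exp (- (k j)\<^sup>2 - 2 * x * k j)),
                              complex_of_real (- c j * exp (- (k j)\<^sup>2 + 2 * x * k j))] (q j))"
  shows "positive_definite H \<and>
         (\<forall>m (x :: nat \<Rightarrow> real). psd_matrix m (\<lambda>r s.
           \<Prod>j=1..n. complex_of_real (exp (- (x r - x s)\<^sup>2)) *
              qpoch_inf_list [complex_of_real (- c j * exp (- (k j)\<^sup>2 - 2 * (x r - x s) * k j)),
                              complex_of_real (- c j * exp (- (k j)\<^sup>2 - 2 * (x s - x r) * k j))] (q j))) \<and>
         (\<forall>(kk::real) cc x. kk > 0 \<longrightarrow> 0 < cc \<longrightarrow> cc < sqrt (exp (- 2 * kk\<^sup>2)) \<longrightarrow>
           Re (qpoch_inf_list [complex_of_real (- cc * exp (- 2 * x * kk)),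
                               complex_of_real (- cc * exp (2 * x * kk))] (exp (- 2 * kk\<^sup>2)))
           \<le> exp (x\<^sup>2) * Re (qpoch_inf_list [complex_of_real (- cc), complex_of_real (- cc)] (exp (- 2 * kk\<^sup>2))))"
proof -
  define hh where "hh j t = exp (- t\<^sup>2) * E (q j) (c j * exp (- (k j)\<^sup>2 - 2 * t * k j)) * E (q j) (c j * exp (- (k j)\<^sup>2 + 2 * t * k j))" for j t
  have q01: "0 < q j" "q j < 1" if "j \<in> {1..n}" for j
    using assms(2)[of j] that unfolding q_def by auto
  have cj: "0 < c j" "c j < 1" if "j \<in> {1..n}" for j using assms(1)[of j] that by auto
  have kj: "0 < k j" if "j \<in> {1..n}" for j using assms(2)[of j] that by auto
  have fac: "complex_of_real (exp (- t\<^sup>2)) *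
              qpoch_inf_list [complex_of_real (- c j * exp (- (k j)\<^sup>2 - 2 * t * k j)),
                              complex_of_real (- c j * exp (- (k j)\<^sup>2 + 2 * t * k j))] (q j)
        = complex_of_real (hh j t)" if j: "j \<in> {1..n}" for j t
  proof -
    have "qpoch_inf_list [complex_of_real (- (c j * exp (- (k j)\<^sup>2 - 2 * t * k j))),
                              complex_of_real (- (c j * exp (- (k j)\<^sup>2 + 2 * t * k j)))] (q j)
          = complex_of_real (E (q j) (c j * exp (- (k j)\<^sup>2 - 2 * t * k j)) * E (q j) (c j * exp (- (k j)\<^sup>2 + 2 * t * k j)))"
      by (rule qlist) (use q01[OF j] cj[OF j] in auto)
    then show ?thesis unfolding hh_def by (simp add: mult.assoc)
  qed
  have Hx: "H t = complex_of_real (\<Prod>j=1..n. hh j t)" for t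
    unfolding H_def of_real_prod by (rule prod.cong[OF refl]) (rule fac)
  have rep: "\<exists>g. \<forall>x y. ((\<lambda>N::nat. g N x * g N y) has_sum hh j (x - y)) UNIV" if j: "j \<in> {1..n}" for j
    unfolding hh_def using factor_rep[OF cj[OF j] kj[OF j], of "q j"] unfolding q_def by simp
  then obtain gg where gg: "\<And>j. j \<in> {1..n} \<Longrightarrow> \<forall>x y. ((\<lambda>N::nat. gg j N x * gg j N y) has_sum hh j (x - y)) UNIV"
    by metis
  have pd: "pdk (\<lambda>x y. \<Prod>j\<in>{1..n}. complex_of_real (hh j (x - y)))"
    by (rule pdk_prod[where g = gg and h = "\<lambda>j x y. hh j (x - y)"]) (use gg in auto)
  have P2: "\<forall>m (x :: nat \<Rightarrow> real). psd_matrix m (\<lambda>r s.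
           \<Prod>j=1..n. complex_of_real (exp (- (x r - x s)\<^sup>2)) *
              qpoch_inf_list [complex_of_real (- c j * exp (- (k j)\<^sup>2 - 2 * (x r - x s) * k j)),
                              complex_of_real (- c j * exp (- (k j)\<^sup>2 - 2 * (x s - x r) * k j))] (q j))"
  proof (intro allI)
    fix m and x :: "nat \<Rightarrow> real"
    have EQ: "\<And>r s. (\<Prod>j=1..n. complex_of_real (exp (- (x r - x s)\<^sup>2)) *
              qpoch_inf_list [complex_of_real (- c j * exp (- (k j)\<^sup>2 - 2 * (x r - x s) * k j)),
                              complex_of_real (- c j * exp (- (k j)\<^sup>2 - 2 * (x s - x r) * k j))] (q j))
        = (\<Prod>j\<in>{1..n}. complex_of_real (hh j (x r - x s)))"
    proof (intro prod.cong refl)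
      fix r s j assume j: "j \<in> {1..n}"
      have eq: "- (k j)\<^sup>2 - 2 * (x s - x r) * k j = - (k j)\<^sup>2 + 2 * (x r - x s) * k j" by (simp add: algebra_simps)
      show "complex_of_real (exp (- (x r - x s)\<^sup>2)) *
              qpoch_inf_list [complex_of_real (- c j * exp (- (k j)\<^sup>2 - 2 * (x r - x s) * k j)),
                              complex_of_real (- c j * exp (- (k j)\<^sup>2 - 2 * (x s - x r) * k j))] (q j)
            = complex_of_real (hh j (x r - x s))"
        unfolding eq by (rule fac[OF j])
    qed
    then show "psd_matrix m (\<lambda>r s. \<Prod>j=1..n. complex_of_real (exp (- (x r - x s)\<^sup>2)) *
              qpoch_inf_list [complex_of_real (- c j * exp (- (k j)\<^sup>2 - 2 * (x r - x s) * k j)),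
                              complex_of_real (- c j * exp (- (k j)\<^sup>2 - 2 * (x s - x r) * k j))] (q j))"
      unfolding psd_matrix_def EQ using pd unfolding pdk_def by blast
  qed
  have hc: "isCont (hh j) t" if j: "j \<in> {1..n}" for j t
  proof -
    have e1: "isCont (\<lambda>t. E (q j) (c j * exp (- (k j)\<^sup>2 - 2 * t * k j))) t"
      by (rule isCont_o2[where f = "\<lambda>t. c j * exp (- (k j)\<^sup>2 - 2 * t * k j)"])
         (auto intro!: continuous_intros E_cont q01[OF j])
    have e2: "isCont (\<lambda>t. E (q j) (c j * exp (- (k j)\<^sup>2 + 2 * t * k j))) t"
      by (rule isCont_o2[where f = "\<lambda>t. c j * exp (- (k j)\<^sup>2 + 2 * t * k j)"])
         (auto intro!: continuous_intros E_cont q01[OF j])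
    show ?thesis unfolding hh_def[abs_def] by (intro continuous_intros e1 e2)
  qed
  have cont: "continuous_on UNIV H"
  proof (rule continuous_at_imp_continuous_on, intro ballI)
    fix t :: real
    have "isCont (\<lambda>t. complex_of_real (\<Prod>j=1..n. hh j t)) t"
      by (intro continuous_intros hc) auto
    then show "isCont H t" unfolding Hx[abs_def] .
  qed
  have hpos: "0 < hh j 0" if j: "j \<in> {1..n}" for j
  proof -
    have "1 \<le> E (q j) (c j * exp (- (k j)\<^sup>2))" by (rule E_ge1) (use q01[OF j] cj[OF j] in auto)
    then show ?thesis unfolding hh_def by simp
  qed
  have H0: "Re (H 0) > 0 \<and> Im (H 0) = 0"
  proof
    have "Re (H 0) = (\<Prod>j=1..n. hh j 0)" by (simp only: Hx Re_complex_of_real)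
    moreover have "0 < (\<Prod>j=1..n. hh j 0)" by (rule prod_pos) (use hpos in blast)
    ultimately show "Re (H 0) > 0" by simp
    show "Im (H 0) = 0" by (simp only: Hx Im_complex_of_real)
  qed
  have P1: "positive_definite H"
    unfolding positive_definite_def
  proof (intro conjI allI cont H0[THEN conjunct1] H0[THEN conjunct2])
    fix m and x :: "nat \<Rightarrow> real"
    have EQ: "\<And>r s. H (x r - x s) = (\<Prod>j\<in>{1..n}. complex_of_real (hh j (x r - x s)))"
      unfolding Hx by (simp add: of_real_prod)
    show "psd_matrix m (\<lambda>r s. H (x r - x s))"
      unfolding psd_matrix_def EQ using pd unfolding pdk_def by blast
  qed
  have P3: "\<forall>(kk::real) cc x. kk > 0 \<longrightarrow> 0 < cc \<longrightarrow> cc < sqrt (exp (- 2 * kk\<^sup>2)) \<longrightarrow>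
           Re (qpoch_inf_list [complex_of_real (- cc * exp (- 2 * x * kk)),
                               complex_of_real (- cc * exp (2 * x * kk))] (exp (- 2 * kk\<^sup>2)))
           \<le> exp (x\<^sup>2) * Re (qpoch_inf_list [complex_of_real (- cc), complex_of_real (- cc)] (exp (- 2 * kk\<^sup>2)))"
  proof (intro allI impI)
    fix kk cc x :: real
    assume kk: "kk > 0" and cc: "0 < cc" "cc < sqrt (exp (- 2 * kk\<^sup>2))"
    define qq where "qq = exp (- 2 * kk\<^sup>2)"
    have qq01: "0 < qq" "qq < 1" using kk unfolding qq_def by auto
    define c' where "c' = cc * exp (kk\<^sup>2)"
    have ccl: "cc < exp (- kk\<^sup>2)" using cc(2) sqrt_exp2 by simp
    have c': "0 < c'" "c' < 1"
    proof -
      show "0 < c'" unfolding c'_def using cc by simp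
      have "c' < exp (- kk\<^sup>2) * exp (kk\<^sup>2)" unfolding c'_def using ccl by simp
      also have "\<dots> = 1" by (simp add: exp_add[symmetric])
      finally show "c' < 1" .
    qed
    define f where "f t = exp (- t\<^sup>2) * E qq (c' * exp (- kk\<^sup>2 - 2 * t * kk)) * E qq (c' * exp (- kk\<^sup>2 + 2 * t * kk))" for t
    obtain g where g: "\<forall>x y. ((\<lambda>N::nat. g N x * g N y) has_sum f (x - y)) UNIV"
      using factor_rep[OF c' kk qq_def] unfolding f_def by blast
    have le: "f x \<le> f 0" by (rule hh_le0[OF g])
    have r1: "c' * exp (- kk\<^sup>2 - 2 * x * kk) = cc * exp (- 2 * x * kk)"
      unfolding c'_def by (simp add: mult.assoc exp_add[symmetric])
    have r2: "c' * exp (- kk\<^sup>2 + 2 * x * kk) = cc * exp (2 * x * kk)"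
      unfolding c'_def by (simp add: mult.assoc exp_add[symmetric])
    have r0: "c' * exp (- kk\<^sup>2) = cc"
      unfolding c'_def by (simp add: mult.assoc exp_add[symmetric])
    have L: "Re (qpoch_inf_list [complex_of_real (- cc * exp (- 2 * x * kk)),
                               complex_of_real (- cc * exp (2 * x * kk))] (exp (- 2 * kk\<^sup>2)))
          = E qq (cc * exp (- 2 * x * kk)) * E qq (cc * exp (2 * x * kk))"
      using qlist[OF qq01, of "cc * exp (- 2 * x * kk)" "cc * exp (2 * x * kk)"] cc unfolding qq_def by simp
    have R: "Re (qpoch_inf_list [complex_of_real (- cc), complex_of_real (- cc)] (exp (- 2 * kk\<^sup>2)))
          = E qq cc * E qq cc"
      using qlist[OF qq01, of cc cc] cc unfolding qq_def by simp
    have "exp (- x\<^sup>2) * (E qq (cc * exp (- 2 * x * kk)) * E qq (cc * exp (2 * x * kk))) \<le> E qq cc * E qq cc"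
      using le unfolding f_def r1 r2 by (simp add: r0 mult.assoc)
    then have "exp (x\<^sup>2) * (exp (- x\<^sup>2) * (E qq (cc * exp (- 2 * x * kk)) * E qq (cc * exp (2 * x * kk)))) \<le> exp (x\<^sup>2) * (E qq cc * E qq cc)"
      by (rule mult_left_mono) simp
    then have "E qq (cc * exp (- 2 * x * kk)) * E qq (cc * exp (2 * x * kk)) \<le> exp (x\<^sup>2) * (E qq cc * E qq cc)"
      by (simp add: mult.assoc[symmetric] exp_add[symmetric])
    then show "Re (qpoch_inf_list [complex_of_real (- cc * exp (- 2 * x * kk)),
                               complex_of_real (- cc * exp (2 * x * kk))] (exp (- 2 * kk\<^sup>2)))
           \<le> exp (x\<^sup>2) * Re (qpoch_inf_list [complex_of_real (- cc), complex_of_real (- cc)] (exp (- 2 * kk\<^sup>2)))"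
      unfolding L R .
  qed
  show ?thesis using P1 P2 P3 by blast
qed

end
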